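(* Fix $T>0$ and start from a (DIC) initial condition with profile $\gamma$. There are constants $c_0=c_0(\gamma,T)$ and $c_1=c_1(\gamma)>0$ such that for all $|a|\ge c_0$, $\mathbb J(a)\ge c_1|a|^3/T$ and $\mathbb I(a)\ge c_1|a|^3/T$.
   Context: $M_1$: measurable $\gamma:\mathbb R\to[0,1]$; for $0<\rho_*,\rho^*<1$, $M_1(\rho_*,\rho^* )$: $\gamma\in M_1$ equal to $\rho_*$ on $(-\infty,x_*]$ and $\rho^*$ on $[x^*,\infty)$ for some $x_*\le x^*$. (DIC) profile: piecewise continuous $\gamma\in M_1(\rho_*,\rho^* )$. A density is $\mu\in D([0,T];M_1)$; $I_0(\mu)=\sup_{G\in C^{1,2}_K([0,T]\times\mathbb R)}\{\int G(T,\cdot)\mu_T-\int G(0,\cdot)\mu_0-\int_0^T\int\mu(\partial_t+\frac12\partial_x^2)G-\frac12\int_0^T\int\mu(1-\mu)G_x^2\}$; $I_\gamma(\mu)=I_0(\mu)$ if $\mu_0=\gamma$ and $\infty$ otherwise. $\mathbb J(a)=\inf\{I_\gamma(\mu):I_\gamma(\mu)<\infty,\ \int_0^\infty(\mu_T-\mu_0)dx=a\}$, $\mathbb I(a)=\inf\{I_\gamma(\mu):I_\gamma(\mu)<\infty,\ \int_0^\infty(\mu_T-\mu_0)dx=\int_0^a\mu_Tdx\}$, with $\int_0^\infty:=\lim_{L\to\infty}\int_0^L$ and $\int_0^a=-\int_a^0$ for $a<0$. *)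

theory Defs
  imports "HOL-Analysis.Analysis"
begin

definition M1 :: "(real \<Rightarrow> real) set" where
  "M1 = {g. g \<in> borel_measurable borel \<and> (\<forall>x. 0 \<le> g x \<and> g x \<le> 1)}"

definition M1_ends :: "real \<Rightarrow> real \<Rightarrow> (real \<Rightarrow> real) set" where
  "M1_ends rl rr = {g \<in> M1. \<exists>xl xr. xl \<le> xr \<and> (\<forall>x\<le>xl. g x = rl) \<and> (\<forall>x\<ge>xr. g x = rr)}"

definition piecewise_continuous :: "(real \<Rightarrow> real) \<Rightarrow> bool" where
  "piecewise_continuous g \<longleftrightarrow> (\<exists>S. finite S \<and> (\<forall>x. x \<notin> S \<longrightarrow> isCont g x) \<and>
      (\<forall>x\<in>S. (\<exists>l. (g \<longlongrightarrow> l) (at_left x)) \<and> (\<exists>r. (g \<longlongrightarrow> r) (at_right x))))"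

definition DIC :: "(real \<Rightarrow> real) \<Rightarrow> bool" where
  "DIC g \<longleftrightarrow> (\<exists>rl rr. 0 < rl \<and> rl < 1 \<and> 0 < rr \<and> rr < 1 \<and> g \<in> M1_ends rl rr \<and> piecewise_continuous g)"

definition CK :: "(real \<Rightarrow> real) set" where
  "CK = {\<phi>. continuous_on UNIV \<phi> \<and> (\<exists>L. \<forall>x. \<bar>x\<bar> > L \<longrightarrow> \<phi> x = 0)}"

text \<open>Densities: elements of D([0,T]; M1), i.e. paths t \<mapsto> mu t in M1, cadlag for the
  vague topology (tested against compactly supported continuous functions);
  joint measurability is required so that the space-time integrals make sense.\<close>
definition density :: "real \<Rightarrow> (real \<Rightarrow> real \<Rightarrow> real) \<Rightarrow> bool" where
  "density T \<mu> \<longleftrightarrow>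
     (\<forall>t\<in>{0..T}. \<mu> t \<in> M1) \<and>
     (\<lambda>(t,x). \<mu> t x) \<in> borel_measurable borel \<and>
     (\<forall>\<phi>\<in>CK. let f = (\<lambda>t. LINT x|lborel. \<mu> t x * \<phi> x) in
        (\<forall>t\<in>{0..<T}. (f \<longlongrightarrow> f t) (at_right t)) \<and>
        (\<forall>t\<in>{0<..T}. \<exists>l. (f \<longlongrightarrow> l) (at_left t)))"

definition pd_t :: "(real \<Rightarrow> real \<Rightarrow> real) \<Rightarrow> real \<Rightarrow> real \<Rightarrow> real" where
  "pd_t G t x = deriv (\<lambda>s. G s x) t"

definition pd_x :: "(real \<Rightarrow> real \<Rightarrow> real) \<Rightarrow> real \<Rightarrow> real \<Rightarrow> real" where
  "pd_x G t x = deriv (\<lambda>y. G t y) x"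

definition C12K :: "(real \<Rightarrow> real \<Rightarrow> real) set" where
  "C12K = {G. (\<forall>t x. (\<lambda>s. G s x) differentiable (at t)) \<and>
              (\<forall>t x. (\<lambda>y. G t y) differentiable (at x)) \<and>
              (\<forall>t x. (\<lambda>y. pd_x G t y) differentiable (at x)) \<and>
              continuous_on UNIV (\<lambda>(t,x). G t x) \<and>
              continuous_on UNIV (\<lambda>(t,x). pd_t G t x) \<and>
              continuous_on UNIV (\<lambda>(t,x). pd_x G t x) \<and>
              continuous_on UNIV (\<lambda>(t,x). pd_x (pd_x G) t x) \<and>
              (\<exists>L. \<forall>t x. \<bar>x\<bar> > L \<longrightarrow> G t x = 0)}"

definition I0 :: "real \<Rightarrow> (real \<Rightarrow> real \<Rightarrow> real) \<Rightarrow> ereal" where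
  "I0 T \<mu> = (SUP G\<in>C12K. ereal (
      (LINT x|lborel. G T x * \<mu> T x) - (LINT x|lborel. G 0 x * \<mu> 0 x)
      - (LINT t|lborel. indicator {0..T} t *
           (LINT x|lborel. \<mu> t x * (pd_t G t x + 1/2 * pd_x (pd_x G) t x)))
      - 1/2 * (LINT t|lborel. indicator {0..T} t *
           (LINT x|lborel. \<mu> t x * (1 - \<mu> t x) * (pd_x G t x)^2))))"

definition Igam :: "real \<Rightarrow> (real \<Rightarrow> real) \<Rightarrow> (real \<Rightarrow> real \<Rightarrow> real) \<Rightarrow> ereal" where
  "Igam T \<gamma> \<mu> = (if AE x in lborel. \<mu> 0 x = \<gamma> x then I0 T \<mu> else \<infinity>)"

definition has_improper_int0 :: "(real \<Rightarrow> real) \<Rightarrow> real \<Rightarrow> bool" where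
  "has_improper_int0 f v \<longleftrightarrow>
     ((\<lambda>L. LINT x|lborel. indicator {0..L} x * f x) \<longlongrightarrow> v) at_top"

definition int0a :: "(real \<Rightarrow> real) \<Rightarrow> real \<Rightarrow> real" where
  "int0a f a = (if 0 \<le> a then LINT x|lborel. indicator {0..a} x * f x
                else - (LINT x|lborel. indicator {a..0} x * f x))"

definition JJ :: "real \<Rightarrow> (real \<Rightarrow> real) \<Rightarrow> real \<Rightarrow> ereal" where
  "JJ T \<gamma> a = Inf {Igam T \<gamma> \<mu> | \<mu>. density T \<mu> \<and> Igam T \<gamma> \<mu> < \<infinity> \<and>
                    has_improper_int0 (\<lambda>x. \<mu> T x - \<mu> 0 x) a}"

definition II :: "real \<Rightarrow> (real \<Rightarrow> real) \<Rightarrow> real \<Rightarrow> ereal" where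
  "II T \<gamma> a = Inf {Igam T \<gamma> \<mu> | \<mu>. density T \<mu> \<and> Igam T \<gamma> \<mu> < \<infinity> \<and>
                    has_improper_int0 (\<lambda>x. \<mu> T x - \<mu> 0 x) (int0a (\<mu> T) a)}"

end

theory Submission imports Defs begin

definition tp :: "nat \<Rightarrow> real \<Rightarrow> real" where "tp n u = (max u 0) ^ n"

lemma tp_deriv:
  assumes "n \<ge> 2"
  shows "(tp n has_real_derivative (real n * tp (n-1) x)) (at x)"
proof -
  consider "x > 0" | "x < 0" | "x = 0" by linarith
  then show ?thesis
  proof cases
    case 1
    have ev: "\<forall>\<^sub>F u in nhds x. tp n u = u ^ n"
      using eventually_nhds_in_open[of "{0<..}" x] 1
      by (auto elim!: eventually_mono simp: tp_def)
    have "((\<lambda>u. u ^ n) has_real_derivative (real n * x ^ (n - 1))) (at x)"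
      using DERIV_pow[of n x UNIV] by simp
    then show ?thesis
      using 1 by (subst DERIV_cong_ev[OF refl ev]) (auto simp: tp_def)
  next
    case 2
    have ev: "\<forall>\<^sub>F u in nhds x. tp n u = 0"
      using eventually_nhds_in_open[of "{..<0}" x] 2 assms
      by (auto elim!: eventually_mono simp: tp_def)
    show ?thesis
      using 2 assms by (subst DERIV_cong_ev[OF refl ev]) (auto simp: tp_def power_0_left)
  next
    case 3
    have "((\<lambda>h. (tp n (0 + h) - tp n 0) / h) \<longlongrightarrow> 0) (at 0)"
    proof (rule filterlim_split_at)
      have "\<forall>\<^sub>F h in at_left (0::real). (tp n (0 + h) - tp n 0) / h = 0"
      proof -
      have E: "eventually (\<lambda>x. x\<in>{-1<..<(0::real)}) (at_left 0)" by (rule eventually_at_left_real) simp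
      show "\<forall>\<^sub>F h in at_left (0::real). (tp n (0 + h) - tp n 0) / h = 0"
      proof (rule eventually_mono[OF E])
        fix h :: real assume "h \<in> {-1<..<0}"
        then show "(tp n (0 + h) - tp n 0) / h = 0"
          using assms by (simp add: tp_def power_0_left)
      qed
      qed
      then show "((\<lambda>h. (tp n (0 + h) - tp n 0) / h) \<longlongrightarrow> 0) (at_left 0)"
        by (rule tendsto_eventually)
    next
      have "\<forall>\<^sub>F h in at_right (0::real). (tp n (0 + h) - tp n 0) / h = h ^ (n - 1)"
      proof -
      have E: "eventually (\<lambda>x. x\<in>{0<..<(1::real)}) (at_right 0)" by (rule eventually_at_right_real) simp
      show ?thesis
      proof (rule eventually_mono[OF E])
        fix h :: real assume "h \<in> {0<..<1}"
        then show "(tp n (0 + h) - tp n 0) / h = h ^ (n - 1)"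
          using assms by (cases n) (auto simp: tp_def)
      qed
      qed
      moreover have "((\<lambda>h::real. h ^ (n - 1)) \<longlongrightarrow> 0) (at_right 0)"
      proof -
        have "((\<lambda>h::real. h ^ (n - 1)) \<longlongrightarrow> 0 ^ (n - 1)) (at_right 0)"
          by (intro tendsto_intros)
        then show ?thesis using assms by simp
      qed
      ultimately show "((\<lambda>h. (tp n (0 + h) - tp n 0) / h) \<longlongrightarrow> 0) (at_right 0)"
        by (rule tendsto_cong[THEN iffD2])
    qed
    then show ?thesis using 3 assms by (simp add: DERIV_def tp_def power_0_left)
  qed
qed

lemma tp_cont: "continuous_on UNIV (tp n)"
  unfolding tp_def by (intro continuous_intros)

definition S :: "real \<Rightarrow> real" where
  "S u = 9/2*(tp 3 u - 3*tp 3 (u-1/3) + 3*tp 3 (u-2/3) - tp 3 (u-1))"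
definition S1 :: "real \<Rightarrow> real" where
  "S1 u = 27/2*(tp 2 u - 3*tp 2 (u-1/3) + 3*tp 2 (u-2/3) - tp 2 (u-1))"
definition S2 :: "real \<Rightarrow> real" where
  "S2 u = 27*(tp 1 u - 3*tp 1 (u-1/3) + 3*tp 1 (u-2/3) - tp 1 (u-1))"

lemma tp_shift_deriv:
  assumes "n \<ge> 2"
  shows "((\<lambda>u. tp n (u - c)) has_real_derivative (real n * tp (n-1) (x - c))) (at x)"
proof -
  have "((\<lambda>u. u - c) has_real_derivative 1) (at x)"
    by (auto intro!: derivative_eq_intros)
  from DERIV_chain2[OF tp_deriv[OF assms] this] show ?thesis by simp
qed

lemma S_deriv: "(S has_real_derivative S1 x) (at x)"
proof -
  have d: "\<And>c. ((\<lambda>u. tp 3 (u - c)) has_real_derivative 3*tp 2 (x-c)) (at x)"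
    using tp_shift_deriv[of 3] by simp
  have "((\<lambda>u. 9/2*(tp 3 (u-0) - 3*tp 3 (u-1/3) + 3*tp 3 (u-2/3) - tp 3 (u-1))) has_real_derivative
     9/2*(3*tp 2 (x-0) - 3*(3*tp 2 (x-1/3)) + 3*(3*tp 2 (x-2/3)) - 3*tp 2 (x-1))) (at x)"
    by (intro DERIV_cmult DERIV_diff DERIV_add d)
  then show ?thesis unfolding S_def[abs_def] S1_def by (simp add: algebra_simps)
qed

lemma S1_deriv: "(S1 has_real_derivative S2 x) (at x)"
proof -
  have d: "\<And>c. ((\<lambda>u. tp 2 (u - c)) has_real_derivative 2*tp 1 (x-c)) (at x)"
    using tp_shift_deriv[of 2] by simp
  have "((\<lambda>u. 27/2*(tp 2 (u-0) - 3*tp 2 (u-1/3) + 3*tp 2 (u-2/3) - tp 2 (u-1))) has_real_derivative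
     27/2*(2*tp 1 (x-0) - 3*(2*tp 1 (x-1/3)) + 3*(2*tp 1 (x-2/3)) - 2*tp 1 (x-1))) (at x)"
    by (intro DERIV_cmult DERIV_diff DERIV_add d)
  then show ?thesis unfolding S1_def[abs_def] S2_def by (simp add: algebra_simps)
qed

lemma S2_cont: "continuous_on UNIV S2"
  unfolding S2_def[abs_def] tp_def by (intro continuous_intros)

lemma tp_le0: "u \<le> 0 \<Longrightarrow> tp k u = (if k = 0 then 1 else 0)"
  by (simp add: tp_def)

lemma S_le0: "u \<le> 0 \<Longrightarrow> S u = 0 \<and> S1 u = 0 \<and> S2 u = 0"
  by (simp add: S_def S1_def S2_def tp_le0)

lemma S_ge1: assumes "u \<ge> 1" shows "S u = 1 \<and> S1 u = 0 \<and> S2 u = 0"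
proof -
  have t: "\<And>c k. c \<le> 1 \<Longrightarrow> tp k (u - c) = (u - c)^k" using assms by (simp add: tp_def)
  have t0: "\<And>k. tp k u = u^k" using t[of 0] by simp
  show ?thesis unfolding S_def S1_def S2_def using t[of "1/3"] t[of "2/3"] t[of 1] t0
    by (auto simp add: power3_eq_cube power2_eq_square) (simp_all add: field_simps)
qed

lemma tp_01: "0 \<le> u \<Longrightarrow> u \<le> 1 \<Longrightarrow> 0 \<le> c \<Longrightarrow> 0 \<le> tp k (u-c) \<and> tp k (u-c) \<le> 1"
  by (auto simp: tp_def intro!: power_le_one)

lemma S_bounds: "\<bar>S u\<bar> \<le> 36 \<and> \<bar>S1 u\<bar> \<le> 108 \<and> \<bar>S2 u\<bar> \<le> 216"
proof (cases "u \<le> 0")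
  case True then show ?thesis using S_le0 by simp
next
  case F: False
  show ?thesis
  proof (cases "u \<ge> 1")
    case True then show ?thesis using S_ge1 by simp
  next
    case False
    have a: "\<And>k c. 0 \<le> c \<Longrightarrow> 0 \<le> tp k (u-c) \<and> tp k (u-c) \<le> 1" using F False tp_01 by auto
    have b: "\<And>k. 0 \<le> tp k u \<and> tp k u \<le> 1" using a[of 0] by simp
    show ?thesis unfolding S_def S1_def S2_def
      using a[of "1/3" 1] a[of "2/3" 1] a[of 1 1] b[of 1] a[of "1/3" 2] a[of "2/3" 2] a[of 1 2] b[of 2]
       a[of "1/3" 3] a[of "2/3" 3] a[of 1 3] b[of 3]
      by (simp add: abs_le_iff)
  qed
qed

definition uu :: "real \<Rightarrow> real \<Rightarrow> real \<Rightarrow> real" where "uu x0 w x = (x - x0 + w) / w"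
definition vv :: "real \<Rightarrow> real \<Rightarrow> real \<Rightarrow> real" where "vv L w x = (L + w - x) / w"

definition phi :: "real \<Rightarrow> real \<Rightarrow> real \<Rightarrow> real \<Rightarrow> real" where
  "phi x0 L w x = S (uu x0 w x) * S (vv L w x)"
definition phi1 :: "real \<Rightarrow> real \<Rightarrow> real \<Rightarrow> real \<Rightarrow> real" where
  "phi1 x0 L w x = (S1 (uu x0 w x) * S (vv L w x) - S (uu x0 w x) * S1 (vv L w x)) / w"
definition phi2 :: "real \<Rightarrow> real \<Rightarrow> real \<Rightarrow> real \<Rightarrow> real" where
  "phi2 x0 L w x = (S2 (uu x0 w x) * S (vv L w x) - 2 * S1 (uu x0 w x) * S1 (vv L w x)
      + S (uu x0 w x) * S2 (vv L w x)) / w^2"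

lemma uu_deriv: "w \<noteq> 0 \<Longrightarrow> (uu x0 w has_real_derivative 1/w) (at x)"
  unfolding uu_def[abs_def] by (auto intro!: derivative_eq_intros)
lemma vv_deriv: "w \<noteq> 0 \<Longrightarrow> (vv L w has_real_derivative -1/w) (at x)"
  unfolding vv_def[abs_def] by (auto intro!: derivative_eq_intros)

lemma phi_deriv: assumes "w \<noteq> 0" shows "(phi x0 L w has_real_derivative phi1 x0 L w x) (at x)"
proof -
  have a: "((\<lambda>x. S (uu x0 w x)) has_real_derivative S1 (uu x0 w x) * (1/w)) (at x)"
    by (rule DERIV_chain2[OF S_deriv uu_deriv[OF assms]])
  have b: "((\<lambda>x. S (vv L w x)) has_real_derivative S1 (vv L w x) * (-1/w)) (at x)"
    by (rule DERIV_chain2[OF S_deriv vv_deriv[OF assms]])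
  show ?thesis unfolding phi_def[abs_def] phi1_def
    by (rule DERIV_cong[OF DERIV_mult[OF a b]]) (use assms in \<open>simp add: field_simps\<close>)
qed

lemma phi1_deriv: assumes "w \<noteq> 0" shows "(phi1 x0 L w has_real_derivative phi2 x0 L w x) (at x)"
proof -
  have a: "((\<lambda>x. S (uu x0 w x)) has_real_derivative S1 (uu x0 w x) * (1/w)) (at x)"
    by (rule DERIV_chain2[OF S_deriv uu_deriv[OF assms]])
  have b: "((\<lambda>x. S (vv L w x)) has_real_derivative S1 (vv L w x) * (-1/w)) (at x)"
    by (rule DERIV_chain2[OF S_deriv vv_deriv[OF assms]])
  have a1: "((\<lambda>x. S1 (uu x0 w x)) has_real_derivative S2 (uu x0 w x) * (1/w)) (at x)"
    by (rule DERIV_chain2[OF S1_deriv uu_deriv[OF assms]])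
  have b1: "((\<lambda>x. S1 (vv L w x)) has_real_derivative S2 (vv L w x) * (-1/w)) (at x)"
    by (rule DERIV_chain2[OF S1_deriv vv_deriv[OF assms]])
  show ?thesis unfolding phi1_def[abs_def] phi2_def
    by (rule DERIV_cong[OF DERIV_cdivide[OF DERIV_diff[OF DERIV_mult[OF a1 b] DERIV_mult[OF a b1]], of w]])
      (use assms in \<open>simp add: field_simps power2_eq_square\<close>)
qed

lemma S_cont: "continuous_on UNIV S"
  by (rule DERIV_continuous_on) (rule S_deriv)
lemma S1_cont: "continuous_on UNIV S1"
  by (rule DERIV_continuous_on) (rule S1_deriv)

lemma phi2_cont: assumes "w \<noteq> 0" shows "continuous_on UNIV (phi2 x0 L w)"
proof -
  have u: "continuous_on UNIV (uu x0 w)" unfolding uu_def[abs_def] by (intro continuous_intros) (use assms in auto)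
  have v: "continuous_on UNIV (vv L w)" unfolding vv_def[abs_def] by (intro continuous_intros) (use assms in auto)
  note c = continuous_on_compose2[OF _ _ subset_UNIV]
  show ?thesis unfolding phi2_def[abs_def]
    by (intro continuous_intros c[OF S_cont u] c[OF S1_cont u] c[OF S2_cont u]
        c[OF S_cont v] c[OF S1_cont v] c[OF S2_cont v]) (use assms in auto)
qed

lemma phi_cont: assumes "w \<noteq> 0" shows "continuous_on UNIV (phi x0 L w)"
  by (rule DERIV_continuous_on) (rule phi_deriv[OF assms])
lemma phi1_cont: assumes "w \<noteq> 0" shows "continuous_on UNIV (phi1 x0 L w)"
  by (rule DERIV_continuous_on) (rule phi1_deriv[OF assms])

lemma phi_zero: assumes "w > 0" "x < x0 - w \<or> x > L + w"
  shows "phi x0 L w x = 0 \<and> phi1 x0 L w x = 0 \<and> phi2 x0 L w x = 0"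
proof -
  have "uu x0 w x \<le> 0 \<or> vv L w x \<le> 0" using assms
    by (auto simp: uu_def vv_def divide_le_0_iff)
  then show ?thesis using S_le0 unfolding phi_def phi1_def phi2_def by auto
qed

definition GG :: "real \<Rightarrow> real \<Rightarrow> real \<Rightarrow> real \<Rightarrow> real \<Rightarrow> real \<Rightarrow> real" where
  "GG c x0 L w t x = c * phi x0 L w x"

lemma pd_t_GG: "pd_t (GG c x0 L w) t x = 0"
  unfolding pd_t_def GG_def by simp

lemma pd_x_GG: "w \<noteq> 0 \<Longrightarrow> pd_x (GG c x0 L w) t x = c * phi1 x0 L w x"
  unfolding pd_x_def GG_def
  by (rule DERIV_imp_deriv) (intro DERIV_cmult phi_deriv)

lemma pd_x_GG_fun: "w \<noteq> 0 \<Longrightarrow> pd_x (GG c x0 L w) = (\<lambda>t x. c * phi1 x0 L w x)"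
  using pd_x_GG by blast

lemma pd_xx_GG: "w \<noteq> 0 \<Longrightarrow> pd_x (pd_x (GG c x0 L w)) t x = c * phi2 x0 L w x"
  unfolding pd_x_GG_fun
  unfolding pd_x_def
  by (rule DERIV_imp_deriv) (intro DERIV_cmult phi1_deriv)

lemma cont_snd: "continuous_on UNIV h \<Longrightarrow> continuous_on UNIV (\<lambda>(t::real, x::real). h x)"
proof -
  assume "continuous_on UNIV h"
  then have "continuous_on UNIV (\<lambda>p::real\<times>real. h (snd p))"
    by (rule continuous_on_compose2[OF _ continuous_on_snd]) auto
  then show ?thesis by (simp add: case_prod_beta')
qed

lemma GG_C12K: assumes "w > 0" shows "GG c x0 L w \<in> C12K"
proof -
  have w: "w \<noteq> 0" using assms by simp
  have d: "\<And>x. (\<lambda>y. GG c x0 L w t y) differentiable (at x)" for t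
    unfolding GG_def differentiable_def
    using has_field_derivative_imp_has_derivative[OF DERIV_cmult[OF phi_deriv[OF w]]] by blast
  have d1: "\<And>x. (\<lambda>y. pd_x (GG c x0 L w) t y) differentiable (at x)" for t
    unfolding pd_x_GG_fun[OF w] differentiable_def
    using has_field_derivative_imp_has_derivative[OF DERIV_cmult[OF phi1_deriv[OF w]]] by blast
  have c0: "continuous_on UNIV (\<lambda>(t, x). GG c x0 L w t x)"
    unfolding GG_def by (intro cont_snd continuous_intros phi_cont[OF w])
  have c1: "continuous_on UNIV (\<lambda>(t, x). pd_t (GG c x0 L w) t x)"
    unfolding pd_t_GG by simp
  have c2: "continuous_on UNIV (\<lambda>(t, x). pd_x (GG c x0 L w) t x)"
    unfolding pd_x_GG[OF w] by (intro cont_snd continuous_intros phi1_cont[OF w])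
  have c3: "continuous_on UNIV (\<lambda>(t, x). pd_x (pd_x (GG c x0 L w)) t x)"
    unfolding pd_xx_GG[OF w] by (intro cont_snd continuous_intros phi2_cont[OF w])
  have sup: "\<forall>t x. \<bar>x\<bar> > \<bar>x0\<bar> + \<bar>L\<bar> + 2*w \<longrightarrow> GG c x0 L w t x = 0"
  proof (intro allI impI)
    fix t x assume "\<bar>x\<bar> > \<bar>x0\<bar> + \<bar>L\<bar> + 2*w"
    then have "x < x0 - w \<or> x > L + w" using assms by linarith
    then show "GG c x0 L w t x = 0" using phi_zero[OF assms] by (simp add: GG_def)
  qed
  have d0: "\<And>t x. (\<lambda>s. GG c x0 L w s x) differentiable (at t)" by (simp add: GG_def)
  show ?thesis unfolding C12K_def
    using d0 d d1 c0 c1 c2 c3 sup by blast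
qed

definition ind2 :: "real \<Rightarrow> real \<Rightarrow> real \<Rightarrow> real \<Rightarrow> real" where
  "ind2 x0 L w x = indicator {x0-w..x0} x + indicator {L..L+w} x"

lemma ind2_nonneg: "0 \<le> ind2 x0 L w x"
  by (simp add: ind2_def)

lemma Su_zero: assumes "w > 0" "x \<notin> {x0-w..x0}"
  shows "S1 (uu x0 w x) = 0 \<and> S2 (uu x0 w x) = 0"
proof -
  have "uu x0 w x \<le> 0 \<or> uu x0 w x \<ge> 1" using assms
    by (auto simp: uu_def divide_le_0_iff le_divide_eq)
  then show ?thesis using S_le0 S_ge1 by auto
qed

lemma Sv_zero: assumes "w > 0" "x \<notin> {L..L+w}"
  shows "S1 (vv L w x) = 0 \<and> S2 (vv L w x) = 0"
proof -
  have "vv L w x \<le> 0 \<or> vv L w x \<ge> 1" using assms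
    by (auto simp: vv_def divide_le_0_iff le_divide_eq)
  then show ?thesis using S_le0 S_ge1 by auto
qed

lemma SB: "\<bar>S u\<bar> \<le> 36" "\<bar>S1 u\<bar> \<le> 108" "\<bar>S2 u\<bar> \<le> 216"
  using S_bounds by auto

lemma prod_bound: "\<bar>a\<bar> \<le> A \<Longrightarrow> \<bar>b\<bar> \<le> B \<Longrightarrow> \<bar>a * b\<bar> \<le> A * B" for a b A B :: real
  by (simp add: abs_mult mult_mono')

lemma phi1_bound: assumes "w > 0"
  shows "\<bar>phi1 x0 L w x\<bar> \<le> 3888 / w * ind2 x0 L w x"
proof -
  have t1: "\<bar>S1 (uu x0 w x) * S (vv L w x)\<bar> \<le> 3888 * indicator {x0-w..x0} x"
    using prod_bound[OF SB(2) SB(1)] Su_zero[OF assms, of x x0] by (cases "x \<in> {x0-w..x0}") auto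
  have t2: "\<bar>S (uu x0 w x) * S1 (vv L w x)\<bar> \<le> 3888 * indicator {L..L+w} x"
    using prod_bound[OF SB(1) SB(2)] Sv_zero[OF assms, of x L] by (cases "x \<in> {L..L+w}") auto
  have "\<bar>phi1 x0 L w x\<bar> = \<bar>S1 (uu x0 w x) * S (vv L w x) - S (uu x0 w x) * S1 (vv L w x)\<bar> / w"
    unfolding phi1_def using assms by simp
  also have "\<dots> \<le> (3888 * indicator {x0-w..x0} x + 3888 * indicator {L..L+w} x) / w"
    using t1 t2 assms by (intro divide_right_mono) auto
  finally show ?thesis by (simp add: ind2_def algebra_simps)
qed

lemma phi2_bound: assumes "w > 0"
  shows "\<bar>phi2 x0 L w x\<bar> \<le> 31104 / w^2 * ind2 x0 L w x"
proof -
  have t1: "\<bar>S2 (uu x0 w x) * S (vv L w x)\<bar> \<le> 7776 * indicator {x0-w..x0} x"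
    using prod_bound[OF SB(3) SB(1)] Su_zero[OF assms, of x x0] by (cases "x \<in> {x0-w..x0}") auto
  have t2: "\<bar>S1 (uu x0 w x) * S1 (vv L w x)\<bar> \<le> 11664 * indicator {x0-w..x0} x"
    using prod_bound[OF SB(2) SB(2)] Su_zero[OF assms, of x x0] by (cases "x \<in> {x0-w..x0}") auto
  have t3: "\<bar>S (uu x0 w x) * S2 (vv L w x)\<bar> \<le> 7776 * indicator {L..L+w} x"
    using prod_bound[OF SB(1) SB(3)] Sv_zero[OF assms, of x L] by (cases "x \<in> {L..L+w}") auto
  have "\<bar>phi2 x0 L w x\<bar> = \<bar>S2 (uu x0 w x) * S (vv L w x) - 2 * (S1 (uu x0 w x) * S1 (vv L w x))
      + S (uu x0 w x) * S2 (vv L w x)\<bar> / w^2"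
    unfolding phi2_def using assms by (simp add: mult.assoc)
  also have "\<dots> \<le> (31104 * indicator {x0-w..x0} x + 31104 * indicator {L..L+w} x) / w^2"
    using t1 t2 t3 assms by (intro divide_right_mono) (auto simp: indicator_def)
  finally show ?thesis by (simp add: ind2_def algebra_simps)
qed

lemma phi1_sq_bound: assumes "w > 0"
  shows "(phi1 x0 L w x)^2 \<le> 2 * 3888^2 / w^2 * ind2 x0 L w x"
proof -
  have t1: "\<bar>S1 (uu x0 w x) * S (vv L w x)\<bar> \<le> 3888 * indicator {x0-w..x0} x"
    using prod_bound[OF SB(2) SB(1)] Su_zero[OF assms, of x x0] by (cases "x \<in> {x0-w..x0}") auto
  have t2: "\<bar>S (uu x0 w x) * S1 (vv L w x)\<bar> \<le> 3888 * indicator {L..L+w} x"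
    using prod_bound[OF SB(1) SB(2)] Sv_zero[OF assms, of x L] by (cases "x \<in> {L..L+w}") auto
  define a where "a = S1 (uu x0 w x) * S (vv L w x)"
  define b where "b = S (uu x0 w x) * S1 (vv L w x)"
  have "(a - b)^2 \<le> 2 * a^2 + 2 * b^2"
  proof -
    have "0 \<le> (a+b)^2" by simp
    then show ?thesis by (simp add: power2_eq_square algebra_simps)
  qed
  also have "a^2 \<le> 3888^2 * indicator {x0-w..x0} x"
  proof -
    have "\<bar>a\<bar>^2 \<le> (3888 * indicator {x0-w..x0} x)^2"
      using t1 a_def by (intro power_mono) auto
    then show ?thesis by (cases "x \<in> {x0-w..x0}") auto
  qed
  also have "b^2 \<le> 3888^2 * indicator {L..L+w} x"
  proof -
    have "\<bar>b\<bar>^2 \<le> (3888 * indicator {L..L+w} x)^2"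
      using t2 b_def by (intro power_mono) auto
    then show ?thesis by (cases "x \<in> {L..L+w}") auto
  qed
  finally have "(a - b)^2 \<le> 2 * 3888^2 * ind2 x0 L w x"
    by (simp add: ind2_def algebra_simps)
  moreover have "(phi1 x0 L w x)^2 = (a - b)^2 / w^2"
    unfolding phi1_def a_def b_def by (simp add: power_divide)
  ultimately have "(phi1 x0 L w x)^2 \<le> (2 * 3888^2 * ind2 x0 L w x) / w^2"
    by (metis divide_right_mono zero_le_power2)
  then show ?thesis by simp
qed

lemma phi_ind_bound: assumes "w > 0" "x0 \<le> L"
  shows "\<bar>phi x0 L w x - indicator {x0..L} x\<bar> \<le> 1297 * ind2 x0 L w x"
proof -
  consider "x < x0 - w \<or> x > L + w" | "x \<in> {x0..L}" | "x \<in> {x0-w..x0}" | "x \<in> {L..L+w}"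
    unfolding atLeastAtMost_iff by linarith
  then show ?thesis
  proof cases
    case 1 then show ?thesis using phi_zero[OF assms(1) 1] assms
      by (auto simp: ind2_def indicator_def)
  next
    case 2
    have "uu x0 w x \<ge> 1" "vv L w x \<ge> 1" using 2 assms by (auto simp: uu_def vv_def le_divide_eq)
    then have "phi x0 L w x = 1" using S_ge1 by (simp add: phi_def)
    then show ?thesis using 2 by (simp add: ind2_nonneg)
  next
    case 3
    have "\<bar>phi x0 L w x\<bar> \<le> 36 * 36" unfolding phi_def by (rule prod_bound[OF SB(1) SB(1)])
    then show ?thesis using 3 by (auto simp: ind2_def indicator_def abs_le_iff)
  next
    case 4
    have "\<bar>phi x0 L w x\<bar> \<le> 36 * 36" unfolding phi_def by (rule prod_bound[OF SB(1) SB(1)])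
    then show ?thesis using 4 by (auto simp: ind2_def indicator_def abs_le_iff)
  qed
qed

lemma int_abs_le:
  fixes h g :: "'a \<Rightarrow> real"
  assumes "\<And>x. \<bar>h x\<bar> \<le> g x" "integrable M g"
  shows "\<bar>integral\<^sup>L M h\<bar> \<le> integral\<^sup>L M g"
proof (cases "integrable M h")
  case True
  have "\<bar>integral\<^sup>L M h\<bar> \<le> integral\<^sup>L M (\<lambda>x. \<bar>h x\<bar>)" by (rule integral_abs_bound)
  also have "\<dots> \<le> integral\<^sup>L M g" using True assms by (intro integral_mono) auto
  finally show ?thesis .
next
  case False
  then have "integral\<^sup>L M h = 0" by (rule not_integrable_integral_eq)
  moreover have "0 \<le> integral\<^sup>L M g"
    by (rule integral_nonneg_AE, rule AE_I2) (use assms(1) abs_ge_zero order_trans in blast)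
  ultimately show ?thesis by simp
qed

lemma integrable_bdd:
  fixes h g :: "real \<Rightarrow> real"
  assumes "h \<in> borel_measurable borel" "\<And>x. \<bar>h x\<bar> \<le> g x" "integrable lborel g"
  shows "integrable lborel h"
proof (rule Bochner_Integration.integrable_bound[OF assms(3)])
  show "h \<in> borel_measurable lborel" using assms(1) by simp
  show "AE x in lborel. norm (h x) \<le> norm (g x)"
    using assms(2) by (intro AE_I2) (metis abs_ge_zero abs_of_nonneg order_trans real_norm_def)
qed

lemma ind_int: "a \<le> b \<Longrightarrow> integrable lborel (\<lambda>x. C * indicator {a..b} x :: real) \<and>
   (LINT x|lborel. C * indicator {a..b} x) = C * (b - a)"
  by (auto intro!: integrable_mult_right)

lemma ind2_int: assumes "w \<ge> 0" shows "integrable lborel (\<lambda>x. C * ind2 x0 L w x) \<and>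
    (LINT x|lborel. C * ind2 x0 L w x) = C * (2*w)"
proof -
  have i1: "integrable lborel (indicator {x0-w..x0} :: real \<Rightarrow> real)" using assms by simp
  have i2: "integrable lborel (indicator {L..L+w} :: real \<Rightarrow> real)" using assms by simp
  have "integrable lborel (\<lambda>x. C * (indicator {x0-w..x0} x + indicator {L..L+w} x) :: real)"
    using i1 i2 by (intro integrable_mult_right integrable_add) auto
  moreover have "(LINT x|lborel. C * (indicator {x0-w..x0} x + indicator {L..L+w} x)) = C * (2*w)"
    using i1 i2 assms by (simp add: integral_add)
  ultimately show ?thesis unfolding ind2_def by simp
qed

lemma outer_bound:
  fixes g :: "real \<Rightarrow> real" and T M :: real
  assumes "T \<ge> 0" "\<And>t. t \<in> {0..T} \<Longrightarrow> \<bar>g t\<bar> \<le> M"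
  shows "\<bar>LINT t|lborel. indicator {0..T} t * g t\<bar> \<le> T * M"
proof -
  have "\<bar>g 0\<bar> \<le> M" by (rule assms(2)) (use assms(1) in auto)
  then have M: "M \<ge> 0" by (meson abs_ge_zero order_trans)
  have "\<bar>LINT t|lborel. indicator {0..T} t * g t\<bar> \<le> (LINT t|lborel. M * indicator {0..T} t)"
  proof (rule int_abs_le)
    show "integrable lborel (\<lambda>t. M * indicator {0..T} t :: real)" using ind_int[OF assms(1)] by blast
    fix t show "\<bar>indicator {0..T} t * g t\<bar> \<le> M * indicator {0..T} t"
      using assms(2)[of t] M by (cases "t \<in> {0..T}") auto
  qed
  also have "\<dots> = T * M" using ind_int[OF assms(1), of M] by simp
  finally show ?thesis .
qed

lemma M1D: "g \<in> M1 \<Longrightarrow> g \<in> borel_measurable borel \<and> 0 \<le> g x \<and> g x \<le> 1"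
  by (simp add: M1_def)

lemma inner1_bound:
  assumes "m \<in> M1" "w > 0"
  shows "\<bar>LINT x|lborel. m x * (0 + 1/2 * (c * phi2 x0 L w x))\<bar> \<le> \<bar>c\<bar> * 31104 / w"
proof -
  have "\<bar>LINT x|lborel. m x * (0 + 1/2 * (c * phi2 x0 L w x))\<bar> \<le>
     (LINT x|lborel. (\<bar>c\<bar>/2 * 31104 / w^2) * ind2 x0 L w x)"
  proof (rule int_abs_le)
    show "integrable lborel (\<lambda>x. (\<bar>c\<bar>/2 * 31104 / w^2) * ind2 x0 L w x)"
      using ind2_int assms by auto
    fix x
    have m: "0 \<le> m x" "m x \<le> 1" using M1D[OF assms(1)] by auto
    have "\<bar>m x * (0 + 1/2 * (c * phi2 x0 L w x))\<bar> \<le> 1 * (\<bar>c\<bar>/2 * \<bar>phi2 x0 L w x\<bar>)"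
      using m by (intro prod_bound) (auto simp: abs_mult)
    also have "\<dots> \<le> \<bar>c\<bar>/2 * (31104 / w^2 * ind2 x0 L w x)"
      using mult_left_mono[OF phi2_bound[OF assms(2), of x0 L x], of "\<bar>c\<bar>/2"] by simp
    finally show "\<bar>m x * (0 + 1/2 * (c * phi2 x0 L w x))\<bar> \<le> (\<bar>c\<bar>/2 * 31104 / w^2) * ind2 x0 L w x"
      by simp
  qed
  also have "\<dots> = (\<bar>c\<bar>/2 * 31104 / w^2) * (2*w)" by (rule conjunct2[OF ind2_int]) (use assms in simp)
  also have "\<dots> = \<bar>c\<bar> * 31104 / w" using assms by (simp add: power2_eq_square field_simps)
  finally show ?thesis .
qed

lemma inner2_bound:
  assumes "m \<in> M1" "w > 0"
  shows "\<bar>LINT x|lborel. m x * (1 - m x) * (c * phi1 x0 L w x)^2\<bar> \<le> c^2 * (4 * 3888^2) / w"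
proof -
  have "\<bar>LINT x|lborel. m x * (1 - m x) * (c * phi1 x0 L w x)^2\<bar> \<le>
     (LINT x|lborel. (c^2 * (2 * 3888^2) / w^2) * ind2 x0 L w x)"
  proof (rule int_abs_le)
    show "integrable lborel (\<lambda>x. (c^2 * (2 * 3888^2) / w^2) * ind2 x0 L w x)"
      using ind2_int assms by auto
    fix x
    have m: "0 \<le> m x" "m x \<le> 1" using M1D[OF assms(1)] by auto
    have "\<bar>m x * (1 - m x) * (c * phi1 x0 L w x)^2\<bar> \<le> 1 * (c^2 * (phi1 x0 L w x)^2)"
      using m by (intro prod_bound) (auto simp: abs_mult power_mult_distrib mult_le_one)
    also have "\<dots> \<le> c^2 * (2 * 3888^2 / w^2 * ind2 x0 L w x)"
      using mult_left_mono[OF phi1_sq_bound[OF assms(2), of x0 L x], of "c^2"] by simp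
    finally show "\<bar>m x * (1 - m x) * (c * phi1 x0 L w x)^2\<bar> \<le> (c^2 * (2 * 3888^2) / w^2) * ind2 x0 L w x"
      by simp
  qed
  also have "\<dots> = (c^2 * (2 * 3888^2) / w^2) * (2*w)" by (rule conjunct2[OF ind2_int]) (use assms in simp)
  also have "\<dots> = c^2 * (4 * 3888^2) / w" using assms by (simp add: power2_eq_square field_simps)
  finally show ?thesis .
qed

lemma phi_abs_bound: assumes "w > 0"
  shows "\<bar>phi x0 L w x\<bar> \<le> 1296 * indicator {x0-w..L+w} x"
proof (cases "x \<in> {x0-w..L+w}")
  case True
  have "\<bar>phi x0 L w x\<bar> \<le> 36 * 36" unfolding phi_def by (rule prod_bound[OF SB(1) SB(1)])
  then show ?thesis using True by simp
next
  case False
  then have "x < x0 - w \<or> x > L + w" by auto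
  then show ?thesis using phi_zero[OF assms] False by simp
qed

lemma value_bound:
  fixes \<mu> :: "real \<Rightarrow> real \<Rightarrow> real"
  assumes T: "T > 0" and w: "w > 0" and L: "x0 \<le> L" and M: "\<forall>t\<in>{0..T}. \<mu> t \<in> M1"
  shows "ereal (c * (LINT x|lborel. indicator {x0..L} x * (\<mu> T x - \<mu> 0 x)) - \<bar>c\<bar> * (2594 * w)
      - T * (\<bar>c\<bar> * 31104 / w) - 1/2 * (T * (c^2 * (4 * 3888^2) / w))) \<le> I0 T \<mu>"
proof -
  define G where "G = GG c x0 L w"
  have w0: "w \<noteq> 0" using w by simp
  have le: "ereal ((LINT x|lborel. G T x * \<mu> T x) - (LINT x|lborel. G 0 x * \<mu> 0 x)
      - (LINT t|lborel. indicator {0..T} t *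
           (LINT x|lborel. \<mu> t x * (pd_t G t x + 1/2 * pd_x (pd_x G) t x)))
      - 1/2 * (LINT t|lborel. indicator {0..T} t *
           (LINT x|lborel. \<mu> t x * (1 - \<mu> t x) * (pd_x G t x)^2))) \<le> I0 T \<mu>"
    unfolding I0_def G_def by (rule SUP_upper[OF GG_C12K[OF w]])
  define X1 where "X1 = (LINT t|lborel. indicator {0..T} t *
           (LINT x|lborel. \<mu> t x * (0 + 1/2 * (c * phi2 x0 L w x))))"
  define X2 where "X2 = (LINT t|lborel. indicator {0..T} t *
           (LINT x|lborel. \<mu> t x * (1 - \<mu> t x) * (c * phi1 x0 L w x)^2))"
  have e1: "(LINT t|lborel. indicator {0..T} t *
           (LINT x|lborel. \<mu> t x * (pd_t G t x + 1/2 * pd_x (pd_x G) t x))) = X1"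
    unfolding X1_def G_def by (simp only: pd_t_GG pd_xx_GG[OF w0])
  have e2: "(LINT t|lborel. indicator {0..T} t *
           (LINT x|lborel. \<mu> t x * (1 - \<mu> t x) * (pd_x G t x)^2)) = X2"
    unfolding X2_def G_def by (simp only: pd_x_GG[OF w0])
  have b1: "\<bar>X1\<bar> \<le> T * (\<bar>c\<bar> * 31104 / w)"
    unfolding X1_def using T M by (intro outer_bound inner1_bound w) auto
  have b2: "\<bar>X2\<bar> \<le> T * (c^2 * (4 * 3888^2) / w)"
    unfolding X2_def using T M by (intro outer_bound inner2_bound w) auto
  have mT: "\<mu> T \<in> M1" and m0: "\<mu> 0 \<in> M1" using M T by auto
  have meas: "\<mu> T \<in> borel_measurable borel" "\<mu> 0 \<in> borel_measurable borel"
    using M1D[OF mT] M1D[OF m0] by auto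
  have pm: "phi x0 L w \<in> borel_measurable borel"
    by (rule borel_measurable_continuous_onI[OF phi_cont[OF w0]])
  define f where "f x = \<mu> T x - \<mu> 0 x" for x
  have fb: "\<bar>f x\<bar> \<le> 1" for x using M1D[OF mT, of x] M1D[OF m0, of x] by (auto simp: f_def)
  have fm: "f \<in> borel_measurable borel" unfolding f_def[abs_def] using meas by measurable
  have ib: "integrable lborel (\<lambda>x. 1296 * indicator {x0-w..L+w} x :: real)"
    using ind_int[of "x0-w" "L+w" 1296] w L by simp
  have int_pT: "integrable lborel (\<lambda>x. phi x0 L w x * \<mu> T x)"
  proof (rule integrable_bdd[OF _ _ ib])
    show "(\<lambda>x. phi x0 L w x * \<mu> T x) \<in> borel_measurable borel" using pm meas by measurable
    fix x show "\<bar>phi x0 L w x * \<mu> T x\<bar> \<le> 1296 * indicator {x0-w..L+w} x"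
      using prod_bound[OF phi_abs_bound[OF w] , of "\<mu> T x" 1 x0 L x] M1D[OF mT, of x] by simp
  qed
  have int_p0: "integrable lborel (\<lambda>x. phi x0 L w x * \<mu> 0 x)"
  proof (rule integrable_bdd[OF _ _ ib])
    show "(\<lambda>x. phi x0 L w x * \<mu> 0 x) \<in> borel_measurable borel" using pm meas by measurable
    fix x show "\<bar>phi x0 L w x * \<mu> 0 x\<bar> \<le> 1296 * indicator {x0-w..L+w} x"
      using prod_bound[OF phi_abs_bound[OF w] , of "\<mu> 0 x" 1 x0 L x] M1D[OF m0, of x] by simp
  qed
  have int_ind: "integrable lborel (\<lambda>x. indicator {x0..L} x * f x)"
  proof (rule integrable_bdd[OF _ _ conjunct1[OF ind_int[OF L, of 1]]])
    show "(\<lambda>x. indicator {x0..L} x * f x) \<in> borel_measurable borel" using fm by measurable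
    fix x show "\<bar>indicator {x0..L} x * f x\<bar> \<le> 1 * indicator {x0..L} x"
      using fb[of x] by (simp add: indicator_def)
  qed
  have int_pf: "integrable lborel (\<lambda>x. phi x0 L w x * f x)"
    using Bochner_Integration.integrable_diff[OF int_pT int_p0] by (simp add: f_def algebra_simps)
  have lin: "(LINT x|lborel. G T x * \<mu> T x) - (LINT x|lborel. G 0 x * \<mu> 0 x)
      = c * (LINT x|lborel. phi x0 L w x * f x)"
  proof -
    have "(LINT x|lborel. G T x * \<mu> T x) - (LINT x|lborel. G 0 x * \<mu> 0 x)
        = c * (LINT x|lborel. phi x0 L w x * \<mu> T x) - c * (LINT x|lborel. phi x0 L w x * \<mu> 0 x)"
      by (simp add: G_def GG_def mult.assoc)
    also have "\<dots> = c * ((LINT x|lborel. phi x0 L w x * \<mu> T x) - (LINT x|lborel. phi x0 L w x * \<mu> 0 x))"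
      by (simp add: algebra_simps)
    also have "(LINT x|lborel. phi x0 L w x * \<mu> T x) - (LINT x|lborel. phi x0 L w x * \<mu> 0 x)
       = (LINT x|lborel. phi x0 L w x * f x)"
      using Bochner_Integration.integral_diff[OF int_pT int_p0] by (simp add: f_def algebra_simps)
    finally show ?thesis .
  qed
  have err: "\<bar>(LINT x|lborel. phi x0 L w x * f x) - (LINT x|lborel. indicator {x0..L} x * f x)\<bar> \<le> 2594 * w"
  proof -
    have "(LINT x|lborel. phi x0 L w x * f x) - (LINT x|lborel. indicator {x0..L} x * f x)
        = (LINT x|lborel. (phi x0 L w x - indicator {x0..L} x) * f x)"
      using Bochner_Integration.integral_diff[OF int_pf int_ind] by (simp add: algebra_simps)
    also have "\<bar>\<dots>\<bar> \<le> (LINT x|lborel. 1297 * ind2 x0 L w x)"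
    proof (rule int_abs_le)
      show "integrable lborel (\<lambda>x. 1297 * ind2 x0 L w x)" by (rule conjunct1[OF ind2_int]) (use w in simp)
      fix x
      show "\<bar>(phi x0 L w x - indicator {x0..L} x) * f x\<bar> \<le> 1297 * ind2 x0 L w x"
        using prod_bound[OF phi_ind_bound[OF w L] fb, of x x] by simp
    qed
    also have "\<dots> = 1297 * (2 * w)" by (rule conjunct2[OF ind2_int]) (use w in simp)
    finally show ?thesis by simp
  qed
  have "c * (LINT x|lborel. phi x0 L w x * f x) \<ge> c * (LINT x|lborel. indicator {x0..L} x * f x) - \<bar>c\<bar> * (2594 * w)"
  proof -
    have "\<bar>c * ((LINT x|lborel. phi x0 L w x * f x) - (LINT x|lborel. indicator {x0..L} x * f x))\<bar>
       \<le> \<bar>c\<bar> * (2594 * w)"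
      unfolding abs_mult using err by (intro mult_left_mono) auto
    then show ?thesis by (simp add: algebra_simps abs_le_iff)
  qed
  then have "c * (LINT x|lborel. indicator {x0..L} x * (\<mu> T x - \<mu> 0 x)) - \<bar>c\<bar> * (2594 * w)
      - T * (\<bar>c\<bar> * 31104 / w) - 1/2 * (T * (c^2 * (4 * 3888^2) / w))
      \<le> (LINT x|lborel. G T x * \<mu> T x) - (LINT x|lborel. G 0 x * \<mu> 0 x) - X1 - 1/2 * X2"
    using lin b1 b2 unfolding f_def by (simp add: abs_le_iff)
  then show ?thesis using le unfolding e1 e2 by (meson ereal_less_eq(3) order_trans)
qed

lemma arith_final:
  fixes D P Q T m lam w sF :: real
  assumes pos: "D > 0" "P > 0" "Q > 0" "T > 0" and m4: "m \<ge> 4" and mq: "m \<ge> 16*D*T*Q"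
    and wd: "w = m/(4*D)" and ld: "lam = m^2/(64*D*P^2*T)" and sF: "sF \<ge> m - 1"
  shows "lam * sF - lam*(D*w) - T*(lam*Q/w) - 1/2*(T*(lam^2*(4*P^2)/w)) \<ge> m^3/(512*D*P^2*T)"
proof -
  have mpos: "m > 0" using m4 by simp
  have wpos: "w > 0" using wd mpos pos by simp
  have lpos: "lam \<ge> 0" using ld pos mpos by simp
  have Dw: "D * w = m/4" using wd pos by simp
  have TQw: "T*Q/w = 4*D*T*Q/m" unfolding wd using pos mpos by (simp add: field_simps)
  have "m*m \<ge> 1*m" using m4 by (intro mult_right_mono) auto
  then have msq: "m*m \<ge> 16*D*T*Q" using mq by linarith
  have h1: "T*Q/w \<le> m/4"
    unfolding TQw using msq mpos by (simp add: field_simps)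
  have h2: "sF - D*w - T*Q/w \<ge> m/4" using h1 Dw sF m4 by linarith
  have "lam * sF - lam*(D*w) - T*(lam*Q/w) = lam * (sF - D*w - T*Q/w)"
    by (simp add: algebra_simps)
  also have "\<dots> \<ge> lam * (m/4)" using h2 lpos by (intro mult_left_mono) auto
  finally have a: "lam * sF - lam*(D*w) - T*(lam*Q/w) \<ge> lam * (m/4)" .
  have b: "1/2*(T*(lam^2*(4*P^2)/w)) = 8*D*T*lam^2*P^2/m"
    unfolding wd using pos mpos by (simp add: field_simps)
  have c: "lam * (m/4) - 8*D*T*lam^2*P^2/m = m^3/(512*D*P^2*T)"
    unfolding ld using pos mpos by (simp add: field_simps power2_eq_square power3_eq_cube)
  show ?thesis using a b c by linarith
qed

lemma flux_bound:
  fixes \<mu> :: "real \<Rightarrow> real \<Rightarrow> real"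
  assumes T: "T > 0" and M: "\<forall>t\<in>{0..T}. \<mu> t \<in> M1"
    and lim: "((\<lambda>L. LINT x|lborel. indicator {x0..L} x * (\<mu> T x - \<mu> 0 x)) \<longlongrightarrow> A) at_top"
    and m: "\<bar>A\<bar> \<ge> m" "m \<ge> 4" "m \<ge> 16*2594*T*31104"
  shows "ereal (m^3/(512*2594*3888^2*T)) \<le> I0 T \<mu>"
proof -
  define F where "F L = (LINT x|lborel. indicator {x0..L} x * (\<mu> T x - \<mu> 0 x))" for L
  have lim': "(F \<longlongrightarrow> A) at_top" unfolding F_def using lim .
  have "eventually (\<lambda>L. dist (F L) A < 1) at_top" using tendstoD[OF lim', of 1] by simp
  moreover have "eventually (\<lambda>L. L \<ge> x0) at_top" by (rule eventually_ge_at_top)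
  ultimately have "eventually (\<lambda>L. dist (F L) A < 1 \<and> L \<ge> x0) at_top" by (rule eventually_conj)
  then obtain N where N: "\<And>L. L \<ge> N \<Longrightarrow> dist (F L) A < 1 \<and> L \<ge> x0"
    unfolding eventually_at_top_linorder by blast
  define L where "L = max N x0"
  have L: "dist (F L) A < 1" "L \<ge> x0" using N[of L] by (auto simp: L_def)
  define s where "s = (if A \<ge> 0 then 1 else -1::real)"
  have sF: "s * F L \<ge> m - 1"
    using L(1) m(1) by (auto simp: s_def dist_real_def abs_if split: if_splits)
  define w where "w = m/(4*2594)"
  define lam where "lam = m^2/(64*2594*3888^2*T)"
  have wpos: "w > 0" using m(2) by (simp add: w_def)
  have lpos: "lam \<ge> 0" using T by (simp add: lam_def)
  have s2: "\<bar>s\<bar> = 1" "s^2 = 1" by (auto simp: s_def)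
  have ar: "lam * (s * F L) - lam*(2594*w) - T*(lam*31104/w) - 1/2*(T*(lam^2*(4*3888^2)/w))
      \<ge> m^3/(512*2594*3888^2*T)"
    by (rule arith_final[OF _ _ _ T m(2) m(3) w_def lam_def sF]) auto
  have vb: "ereal ((s*lam) * F L - \<bar>s*lam\<bar> * (2594 * w)
      - T * (\<bar>s*lam\<bar> * 31104 / w) - 1/2 * (T * ((s*lam)^2 * (4 * 3888^2) / w))) \<le> I0 T \<mu>"
    using value_bound[OF T wpos L(2) M, of "s*lam"] unfolding F_def by simp
  have eq: "(s*lam) * F L - \<bar>s*lam\<bar> * (2594 * w)
      - T * (\<bar>s*lam\<bar> * 31104 / w) - 1/2 * (T * ((s*lam)^2 * (4 * 3888^2) / w))
     = lam * (s * F L) - lam*(2594*w) - T*(lam*31104/w) - 1/2*(T*(lam^2*(4*3888^2)/w))"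
    using s2 lpos by (simp add: abs_mult power_mult_distrib)
  show ?thesis using vb ar unfolding eq by (meson ereal_less_eq(3) order_trans)
qed

lemma ind_g_int:
  fixes g :: "real \<Rightarrow> real"
  assumes "g \<in> borel_measurable borel" "\<And>x. \<bar>g x\<bar> \<le> 1" "p \<le> q"
  shows "integrable lborel (\<lambda>x. indicator {p..q} x * g x)"
proof (rule integrable_bdd[OF _ _ conjunct1[OF ind_int[OF assms(3), of 1]]])
  show "(\<lambda>x. indicator {p..q} x * g x) \<in> borel_measurable borel" using assms(1) by measurable
  fix x show "\<bar>indicator {p..q} x * g x\<bar> \<le> 1 * indicator {p..q} x"
    using assms(2)[of x] by (simp add: indicator_def)
qed

lemma split_int:
  fixes g :: "real \<Rightarrow> real"
  assumes g: "g \<in> borel_measurable borel" "\<And>x. \<bar>g x\<bar> \<le> 1" and pq: "p \<le> q" "q \<le> r"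
  shows "(LINT x|lborel. indicator {p..r} x * g x) =
    (LINT x|lborel. indicator {p..q} x * g x) + (LINT x|lborel. indicator {q..r} x * g x)"
proof -
  have "(LINT x|lborel. indicator {p..r} x * g x) =
     (LINT x|lborel. indicator {p..q} x * g x + indicator {q..r} x * g x)"
  proof (rule integral_cong_AE)
    show "(\<lambda>x. indicator {p..r} x * g x) \<in> borel_measurable lborel" using g by simp
    show "(\<lambda>x. indicator {p..q} x * g x + indicator {q..r} x * g x) \<in> borel_measurable lborel"
      using g by simp
    show "AE x in lborel. indicator {p..r} x * g x = indicator {p..q} x * g x + indicator {q..r} x * g x"
      by (rule eventually_mono[OF AE_lborel_singleton[of q]]) (use pq in \<open>auto simp: indicator_def\<close>)
  qed
  also have "\<dots> = (LINT x|lborel. indicator {p..q} x * g x) + (LINT x|lborel. indicator {q..r} x * g x)"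
    by (rule Bochner_Integration.integral_add; rule ind_g_int) (use g pq in auto)
  finally show ?thesis .
qed

lemma lower_int:
  fixes g :: "real \<Rightarrow> real"
  assumes g: "g \<in> borel_measurable borel" "\<And>x. 0 \<le> g x \<and> g x \<le> 1"
    and r: "r \<ge> 0" "\<And>x. p' \<le> x \<Longrightarrow> x \<le> q' \<Longrightarrow> g x = r"
    and pq: "p \<le> p'" "p' \<le> q'" "q' \<le> q"
  shows "(LINT x|lborel. indicator {p..q} x * g x) \<ge> r * (q' - p')"
proof -
  have gb: "\<And>x. \<bar>g x\<bar> \<le> 1" using g(2) by (simp add: abs_le_iff)
  have "r * (q' - p') = (LINT x|lborel. r * indicator {p'..q'} x)" using conjunct2[OF ind_int[OF pq(2), of r]] pq(2) by simp
  also have "\<dots> \<le> (LINT x|lborel. indicator {p..q} x * g x)"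
  proof (rule integral_mono)
    show "integrable lborel (\<lambda>x. r * indicator {p'..q'} x)" using ind_int[OF pq(2)] by blast
    show "integrable lborel (\<lambda>x. indicator {p..q} x * g x)"
      using ind_g_int[OF g(1) gb] pq by simp
    fix x show "r * indicator {p'..q'} x \<le> indicator {p..q} x * g x"
      using r(2)[of x] g(2)[of x] pq by (auto simp: indicator_def)
  qed
  finally show ?thesis .
qed

lemma II_flux:
  fixes \<mu> :: "real \<Rightarrow> real \<Rightarrow> real" and \<gamma> :: "real \<Rightarrow> real"
  assumes T: "T > 0" and M: "\<forall>t\<in>{0..T}. \<mu> t \<in> M1" and ae: "AE x in lborel. \<mu> 0 x = \<gamma> x"
    and gM: "\<gamma> \<in> M1" and gl: "\<forall>x\<le>xl. \<gamma> x = rl" and gr: "\<forall>x\<ge>xr. \<gamma> x = rr"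
    and rl: "0 < rl" "rl \<le> 1" and rr: "0 < rr" "rr \<le> 1"
    and h: "has_improper_int0 (\<lambda>x. \<mu> T x - \<mu> 0 x) (int0a (\<mu> T) a)"
  shows "\<exists>A. ((\<lambda>L. LINT x|lborel. indicator {a..L} x * (\<mu> T x - \<mu> 0 x)) \<longlongrightarrow> A) at_top \<and>
    \<bar>A\<bar> \<ge> min rl rr * \<bar>a\<bar> - (max xr 0 + max (-xl) 0)"
proof -
  define f where "f x = \<mu> T x - \<mu> 0 x" for x
  define F0 where "F0 L = (LINT x|lborel. indicator {0..L} x * f x)" for L
  define Fa where "Fa L = (LINT x|lborel. indicator {a..L} x * f x)" for L
  have mT: "\<mu> T \<in> M1" and m0: "\<mu> 0 \<in> M1" using M T by auto
  have meas: "\<mu> T \<in> borel_measurable borel" "\<mu> 0 \<in> borel_measurable borel" "\<gamma> \<in> borel_measurable borel"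
    using M1D[OF mT] M1D[OF m0] M1D[OF gM] by auto
  have fb: "\<bar>f x\<bar> \<le> 1" for x using M1D[OF mT, of x] M1D[OF m0, of x] by (auto simp: f_def)
  have fm: "f \<in> borel_measurable borel" unfolding f_def[abs_def] using meas by measurable
  have Tb: "\<bar>\<mu> T x\<bar> \<le> 1" "\<bar>\<mu> 0 x\<bar> \<le> 1" "0 \<le> \<gamma> x \<and> \<gamma> x \<le> 1" for x
    using M1D[OF mT, of x] M1D[OF m0, of x] M1D[OF gM, of x] by auto
  have lim0: "(F0 \<longlongrightarrow> int0a (\<mu> T) a) at_top"
    using h unfolding has_improper_int0_def F0_def f_def by simp
  have ge: "\<And>p q. p \<le> q \<Longrightarrow> (LINT x|lborel. indicator {p..q} x * \<mu> 0 x) = (LINT x|lborel. indicator {p..q} x * \<gamma> x)"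
  proof -
    fix p q :: real
    show "(LINT x|lborel. indicator {p..q} x * \<mu> 0 x) = (LINT x|lborel. indicator {p..q} x * \<gamma> x)"
      by (rule integral_cong_AE) (use meas in simp, use meas in simp, rule eventually_mono[OF ae], simp)
  qed
  have diffeq: "\<And>p q. p \<le> q \<Longrightarrow> (LINT x|lborel. indicator {p..q} x * \<mu> T x) - (LINT x|lborel. indicator {p..q} x * f x)
      = (LINT x|lborel. indicator {p..q} x * \<mu> 0 x)"
  proof -
    fix p q :: real assume pq: "p \<le> q"
    have "(LINT x|lborel. indicator {p..q} x * \<mu> T x) - (LINT x|lborel. indicator {p..q} x * f x)
      = (LINT x|lborel. indicator {p..q} x * \<mu> T x - indicator {p..q} x * f x)"
      by (rule Bochner_Integration.integral_diff[symmetric]; rule ind_g_int) (use meas Tb fm fb pq in auto)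
    then show "(LINT x|lborel. indicator {p..q} x * \<mu> T x) - (LINT x|lborel. indicator {p..q} x * f x)
      = (LINT x|lborel. indicator {p..q} x * \<mu> 0 x)"
      by (simp add: f_def algebra_simps)
  qed
  define X where "X = max xr 0"
  define X' where "X' = max (-xl) 0"
  have rho: "min rl rr \<le> rl" "min rl rr \<le> rr" "min rl rr \<le> 1" using rl rr by auto
  show ?thesis
  proof (cases "a \<ge> 0")
    case True
    have ev: "eventually (\<lambda>L. F0 L - (LINT x|lborel. indicator {0..a} x * f x) = Fa L) at_top"
    proof (rule eventually_mono[OF eventually_ge_at_top[of a]])
      fix L assume "a \<le> L"
      then show "F0 L - (LINT x|lborel. indicator {0..a} x * f x) = Fa L"
        unfolding F0_def Fa_def using split_int[OF fm fb True, of L] by simp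
    qed
    define A where "A = (LINT x|lborel. indicator {0..a} x * \<gamma> x)"
    have "((\<lambda>L. F0 L - (LINT x|lborel. indicator {0..a} x * f x)) \<longlongrightarrow>
        int0a (\<mu> T) a - (LINT x|lborel. indicator {0..a} x * f x)) at_top"
      by (intro tendsto_intros lim0)
    moreover have "int0a (\<mu> T) a - (LINT x|lborel. indicator {0..a} x * f x) = A"
      unfolding A_def int0a_def using True diffeq[OF True] ge[OF True] by simp
    ultimately have lim: "(Fa \<longlongrightarrow> A) at_top" using tendsto_cong[OF ev] by simp
    have "\<bar>A\<bar> \<ge> min rl rr * \<bar>a\<bar> - (X + X')"
    proof (cases "X \<le> a")
      case True
      have "A \<ge> rr * (a - X)" unfolding A_def
        by (rule lower_int[OF meas(3) Tb(3)]) (use True gr rr \<open>0 \<le> a\<close> in \<open>auto simp: X_def\<close>)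
      moreover have "rr * (a - X) \<ge> min rl rr * a - X"
      proof -
        have "min rl rr * a \<le> rr * a" by (rule mult_right_mono) (use rho \<open>0 \<le> a\<close> in auto)
        moreover have "rr * X \<le> X" using rr by (simp add: X_def mult_left_le_one_le)
        ultimately show ?thesis by (simp add: right_diff_distrib)
      qed
      ultimately show ?thesis using \<open>0 \<le> a\<close> by (simp add: X'_def)
    next
      case False
      have A0: "A \<ge> 0" unfolding A_def
        by (rule integral_nonneg_AE, rule AE_I2) (use Tb(3) in \<open>simp add: indicator_def\<close>)
      have "min rl rr * a \<le> a" using rho rl rr \<open>0 \<le> a\<close> by (simp add: mult_left_le_one_le)
      then show ?thesis using A0 False \<open>0 \<le> a\<close> by (simp add: X'_def)
    qed
    then show ?thesis using lim unfolding Fa_def f_def X_def X'_def by blast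
  next
    case False
    have a0: "a \<le> 0" using False by simp
    have ev: "eventually (\<lambda>L. (LINT x|lborel. indicator {a..0} x * f x) + F0 L = Fa L) at_top"
    proof (rule eventually_mono[OF eventually_ge_at_top[of 0]])
      fix L :: real assume "0 \<le> L"
      then show "(LINT x|lborel. indicator {a..0} x * f x) + F0 L = Fa L"
        unfolding F0_def Fa_def using split_int[OF fm fb a0, of L] by simp
    qed
    define A where "A = - (LINT x|lborel. indicator {a..0} x * \<gamma> x)"
    have "((\<lambda>L. (LINT x|lborel. indicator {a..0} x * f x) + F0 L) \<longlongrightarrow>
        (LINT x|lborel. indicator {a..0} x * f x) + int0a (\<mu> T) a) at_top"
      by (intro tendsto_intros lim0)
    moreover have "(LINT x|lborel. indicator {a..0} x * f x) + int0a (\<mu> T) a = A"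
      unfolding A_def int0a_def using False diffeq[OF a0] ge[OF a0] by simp
    ultimately have lim: "(Fa \<longlongrightarrow> A) at_top" using tendsto_cong[OF ev] by simp
    have "\<bar>A\<bar> \<ge> min rl rr * \<bar>a\<bar> - (X + X')"
    proof (cases "a \<le> -X'")
      case True
      have "-A \<ge> rl * (-X' - a)" unfolding A_def
        by (simp, rule lower_int[OF meas(3) Tb(3)]) (use True gl rl a0 in \<open>auto simp: X'_def\<close>)
      moreover have "rl * (-X' - a) \<ge> min rl rr * (-a) - X'"
      proof -
        have "min rl rr * (-a) \<le> rl * (-a)" by (rule mult_right_mono) (use rho a0 in auto)
        moreover have "rl * X' \<le> X'" using rl by (simp add: X'_def mult_left_le_one_le)
        ultimately show ?thesis by (simp add: right_diff_distrib)
      qed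
      ultimately show ?thesis using a0 by (simp add: X_def)
    next
      case False
      have A0: "-A \<ge> 0" unfolding A_def
        by (simp, rule integral_nonneg_AE, rule AE_I2) (use Tb(3) in \<open>simp add: indicator_def\<close>)
      have "min rl rr * (-a) \<le> -a" using rho rl rr a0 mult_left_le_one_le[of "-a" "min rl rr"] by simp
      then show ?thesis using A0 False a0 by (simp add: X_def)
    qed
    then show ?thesis using lim unfolding Fa_def f_def X_def X'_def by blast
  qed
qed

lemma core:
  fixes \<mu> :: "real \<Rightarrow> real \<Rightarrow> real"
  assumes T: "T > 0" and M: "\<forall>t\<in>{0..T}. \<mu> t \<in> M1"
    and lim: "((\<lambda>L. LINT x|lborel. indicator {x0..L} x * (\<mu> T x - \<mu> 0 x)) \<longlongrightarrow> A) at_top"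
    and rho: "\<rho> > 0" and C: "C \<ge> 0" and hA: "\<bar>A\<bar> \<ge> \<rho> * \<bar>a\<bar> - C"
    and ha: "\<bar>a\<bar> \<ge> 2*(C + 4 + 16*2594*T*31104)/\<rho>"
  shows "ereal (\<rho>^3/(8*(512*2594*3888^2)) * \<bar>a\<bar>^3 / T) \<le> I0 T \<mu>"
proof -
  define m where "m = \<rho> * \<bar>a\<bar> / 2"
  have "\<rho> * \<bar>a\<bar> \<ge> 2*(C + 4 + 16*2594*T*31104)" using ha rho by (simp add: field_simps)
  then have mb: "m \<ge> C + 4 + 16*2594*T*31104" by (simp add: m_def)
  have K: "16*2594*T*31104 \<ge> 0" using T by simp
  have m4: "m \<ge> 4" using mb C K by linarith
  have mK: "m \<ge> 16*2594*T*31104" using mb C by linarith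
  have mA: "\<bar>A\<bar> \<ge> m" using hA mb K by (simp add: m_def)
  have "ereal (m^3/(512*2594*3888^2*T)) \<le> I0 T \<mu>"
    by (rule flux_bound[OF T M lim mA m4 mK])
  moreover have "m^3/(512*2594*3888^2*T) = \<rho>^3/(8*(512*2594*3888^2)) * \<bar>a\<bar>^3 / T"
    unfolding m_def by (simp add: power_mult_distrib power_divide field_simps)
  ultimately show ?thesis by simp
qed

theorem lemma4p2:
  fixes \<gamma> :: "real \<Rightarrow> real"
  assumes "DIC \<gamma>"
  shows "\<exists>c1>0. \<forall>T>0. \<exists>c0. \<forall>a::real. \<bar>a\<bar> \<ge> c0 \<longrightarrow>
           JJ T \<gamma> a \<ge> ereal (c1 * \<bar>a\<bar>^3 / T) \<and> II T \<gamma> a \<ge> ereal (c1 * \<bar>a\<bar>^3 / T)"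
proof -
  obtain rl rr where r: "0 < rl" "rl < 1" "0 < rr" "rr < 1" and gE: "\<gamma> \<in> M1_ends rl rr"
    using assms unfolding DIC_def by blast
  obtain xl xr where gM: "\<gamma> \<in> M1" and gl: "\<forall>x\<le>xl. \<gamma> x = rl" and gr: "\<forall>x\<ge>xr. \<gamma> x = rr"
    using gE unfolding M1_ends_def by blast
  define \<rho> where "\<rho> = min rl rr"
  define C where "C = max xr 0 + max (-xl) 0"
  define c1 where "c1 = \<rho>^3/(8*(512*2594*3888^2))"
  have rho: "\<rho> > 0" "\<rho> \<le> 1" using r by (auto simp: \<rho>_def)
  have C: "C \<ge> 0" by (simp add: C_def)
  have c1: "c1 > 0" using rho by (simp add: c1_def)
  have Igam: "\<And>\<mu>. Igam T \<gamma> \<mu> < \<infinity> \<Longrightarrow> (AE x in lborel. \<mu> 0 x = \<gamma> x) \<and> Igam T \<gamma> \<mu> = I0 T \<mu>" for T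
    unfolding Igam_def by (auto split: if_splits)
  have dens: "\<And>\<mu>. density T \<mu> \<Longrightarrow> \<forall>t\<in>{0..T}. \<mu> t \<in> M1" for T
    unfolding density_def by blast
  show ?thesis
  proof (rule exI[of _ c1], intro conjI c1 allI impI)
    fix T :: real assume T: "T > 0"
    define c0 where "c0 = 2*(C + 4 + 16*2594*T*31104)/\<rho>"
    show "\<exists>c0. \<forall>a::real. \<bar>a\<bar> \<ge> c0 \<longrightarrow>
           JJ T \<gamma> a \<ge> ereal (c1 * \<bar>a\<bar>^3 / T) \<and> II T \<gamma> a \<ge> ereal (c1 * \<bar>a\<bar>^3 / T)"
    proof (intro exI[of _ c0] allI impI conjI)
      fix a :: real assume ha: "\<bar>a\<bar> \<ge> c0"
      show "JJ T \<gamma> a \<ge> ereal (c1 * \<bar>a\<bar>^3 / T)"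
        unfolding JJ_def
      proof (rule Inf_greatest)
        fix y assume "y \<in> {Igam T \<gamma> \<mu> | \<mu>. density T \<mu> \<and> Igam T \<gamma> \<mu> < \<infinity> \<and>
                    has_improper_int0 (\<lambda>x. \<mu> T x - \<mu> 0 x) a}"
        then obtain \<mu> where y: "y = Igam T \<gamma> \<mu>" and d: "density T \<mu>" and fin: "Igam T \<gamma> \<mu> < \<infinity>"
          and h: "has_improper_int0 (\<lambda>x. \<mu> T x - \<mu> 0 x) a" by blast
        have lim: "((\<lambda>L. LINT x|lborel. indicator {0..L} x * (\<mu> T x - \<mu> 0 x)) \<longlongrightarrow> a) at_top"
          using h unfolding has_improper_int0_def by simp
        have hA: "\<bar>a\<bar> \<ge> \<rho> * \<bar>a\<bar> - C" using rho C mult_left_le_one_le[of "\<bar>a\<bar>" \<rho>] by simp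
        have "ereal (c1 * \<bar>a\<bar>^3 / T) \<le> I0 T \<mu>"
          unfolding c1_def by (rule core[OF T dens[OF d] lim rho(1) C hA]) (use ha in \<open>simp add: c0_def\<close>)
        then show "ereal (c1 * \<bar>a\<bar>^3 / T) \<le> y" using y Igam[OF fin] by simp
      qed
      show "II T \<gamma> a \<ge> ereal (c1 * \<bar>a\<bar>^3 / T)"
        unfolding II_def
      proof (rule Inf_greatest)
        fix y assume "y \<in> {Igam T \<gamma> \<mu> | \<mu>. density T \<mu> \<and> Igam T \<gamma> \<mu> < \<infinity> \<and>
                    has_improper_int0 (\<lambda>x. \<mu> T x - \<mu> 0 x) (int0a (\<mu> T) a)}"
        then obtain \<mu> where y: "y = Igam T \<gamma> \<mu>" and d: "density T \<mu>" and fin: "Igam T \<gamma> \<mu> < \<infinity>"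
          and h: "has_improper_int0 (\<lambda>x. \<mu> T x - \<mu> 0 x) (int0a (\<mu> T) a)" by blast
        obtain A where lim: "((\<lambda>L. LINT x|lborel. indicator {a..L} x * (\<mu> T x - \<mu> 0 x)) \<longlongrightarrow> A) at_top"
          and hA: "\<bar>A\<bar> \<ge> min rl rr * \<bar>a\<bar> - (max xr 0 + max (-xl) 0)"
          using II_flux[OF T dens[OF d] conjunct1[OF Igam[OF fin]] gM gl gr r(1) _ r(3) _ h] r by auto
        have "ereal (c1 * \<bar>a\<bar>^3 / T) \<le> I0 T \<mu>"
          unfolding c1_def by (rule core[OF T dens[OF d] lim rho(1) C]) (use ha hA in \<open>simp_all add: c0_def \<rho>_def C_def\<close>)
        then show "ereal (c1 * \<bar>a\<bar>^3 / T) \<le> y" using y Igam[OF fin] by simp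
      qed
    qed
  qed
qed

end
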